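(* Let $S(t,x,y,u,v)=\sum_\pi t^{|\pi|}x^{\mathrm{lmax}(\pi)}y^{\mathrm{rmax}(\pi)}u^{\mathrm{lmin}(\pi)}v^{\mathrm{rmin}(\pi)}$ over all separable permutations, and $I(t,x,y,u,v)$ the same sum over irreducible separable permutations. Let $S(t,y,u,v)=\sum_\pi t^{|\pi|}y^{\mathrm{rmax}(\pi)}u^{\mathrm{lmin}(\pi)}v^{\mathrm{rmin}(\pi)}$ and $S(t,x,u,v)=\sum_\pi t^{|\pi|}x^{\mathrm{lmax}(\pi)}u^{\mathrm{lmin}(\pi)}v^{\mathrm{rmin}(\pi)}$, both over all separable permutations. Let $S(t,z)=\sum_\pi t^{|\pi|}z^{\mathrm{rmax}(\pi)}$ over all separable permutations, and $$E(t,z_1,z_2,z_3)=z_1z_2z_3t+\frac{(S(t,z_1)+1)(S(t,z_2)+1)(S(t,z_3)+1)\,t^2z_1^2z_2z_3}{(1-S(t,z_1)S(t,z_3))(1-S(t,z_1)S(t,z_2))}.$$ Then $$I(t,x,y,u,v)=xyuvt+E(t,x,y,u)\,S(t,y,u,v),$$ the corresponding sum over reducible separable permutations equals $E(t,y,x,v)\,S(t,x,u,v)$, and $$S(t,x,y,u,v)=xyuvt+E(t,x,y,u)\,S(t,y,u,v)+E(t,y,x,v)\,S(t,x,u,v).$$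
   Context: A permutation of length $n$ is a word $\pi=\pi_1\cdots\pi_n$ containing each element of $[n]$ exactly once; $|\pi|=n$. For $\pi$ of length $m$, $\sigma$ of length $n$: $\pi\oplus\sigma=\pi_1\cdots\pi_m(\sigma_1+m)\cdots(\sigma_n+m)$, $\pi\ominus\sigma=(\pi_1+n)\cdots(\pi_m+n)\sigma_1\cdots\sigma_n$. Separable permutations are those of length $\ge1$ obtained from $1$ by repeatedly applying $\oplus,\ominus$ (equivalently, avoiding $2413$ and $3142$). The permutation $1$ is irreducible; a permutation of length $n\ge2$ is irreducible if there is no $i$, $2\le i\le n$, such that every element of $\pi_1\cdots\pi_{i-1}$ is less than every element of $\pi_i\cdots\pi_n$; reducible means not irreducible (length $\ge2$). $\pi_i$ is a left-to-right maximum (minimum) if $\pi_i>\pi_j$ ($\pi_i<\pi_j$) for all $j<i$, a right-to-left maximum (minimum) if $\pi_i>\pi_j$ ($\pi_i<\pi_j$) for all $j>i$; $\mathrm{lmax},\mathrm{lmin},\mathrm{rmax},\mathrm{rmin}$ count these. *)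

theory Defs
  imports "HOL-Computational_Algebra.Formal_Power_Series"
begin

text \<open>Permutations are lists of naturals: p = p_1 ... p_n containing each of 1..n once.\<close>

definition oplus :: "nat list \<Rightarrow> nat list \<Rightarrow> nat list" where
  "oplus p s = p @ map (\<lambda>a. a + length p) s"

definition ominus :: "nat list \<Rightarrow> nat list \<Rightarrow> nat list" where
  "ominus p s = map (\<lambda>a. a + length s) p @ s"

inductive separable :: "nat list \<Rightarrow> bool" where
  sep_one: "separable [1]"
| sep_oplus: "separable p \<Longrightarrow> separable s \<Longrightarrow> separable (oplus p s)"
| sep_ominus: "separable p \<Longrightarrow> separable s \<Longrightarrow> separable (ominus p s)"

text \<open>Irreducible: p = 1, or length n >= 2 and there is no i with 2 <= i <= n such that
  every element of p_1..p_(i-1) is less than every element of p_i..p_n.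
  (0-based: the prefix is take (i-1) p, the suffix drop (i-1) p.)\<close>
definition irreducible_perm :: "nat list \<Rightarrow> bool" where
  "irreducible_perm p \<longleftrightarrow> p = [1] \<or>
     (length p \<ge> 2 \<and> \<not> (\<exists>i. 2 \<le> i \<and> i \<le> length p \<and>
        (\<forall>a \<in> set (take (i - 1) p). \<forall>b \<in> set (drop (i - 1) p). a < b)))"

definition reducible_perm :: "nat list \<Rightarrow> bool" where
  "reducible_perm p \<longleftrightarrow> length p \<ge> 2 \<and> \<not> irreducible_perm p"

definition lmax :: "nat list \<Rightarrow> nat" where
  "lmax p = card {i. i < length p \<and> (\<forall>j<i. p ! i > p ! j)}"
definition lmin :: "nat list \<Rightarrow> nat" where
  "lmin p = card {i. i < length p \<and> (\<forall>j<i. p ! i < p ! j)}"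
definition rmax :: "nat list \<Rightarrow> nat" where
  "rmax p = card {i. i < length p \<and> (\<forall>j. i < j \<and> j < length p \<longrightarrow> p ! i > p ! j)}"
definition rmin :: "nat list \<Rightarrow> nat" where
  "rmin p = card {i. i < length p \<and> (\<forall>j. i < j \<and> j < length p \<longrightarrow> p ! i < p ! j)}"

definition GF :: "(nat list \<Rightarrow> bool) \<Rightarrow> (nat list \<Rightarrow> real) \<Rightarrow> real fps" where
  "GF P w = Abs_fps (\<lambda>n. \<Sum>p | length p = n \<and> P p. w p)"

definition S_z :: "real \<Rightarrow> real fps" where
  "S_z z = GF separable (\<lambda>p. z ^ rmax p)"

definition E_fps :: "real \<Rightarrow> real \<Rightarrow> real \<Rightarrow> real fps" where
  "E_fps z1 z2 z3 =
     fps_const (z1 * z2 * z3) * fps_X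
   + (S_z z1 + 1) * (S_z z2 + 1) * (S_z z3 + 1) * fps_X ^ 2 * fps_const (z1 ^ 2 * z2 * z3)
     * inverse ((1 - S_z z1 * S_z z3) * (1 - S_z z1 * S_z z2))"

end

theory Submission
  imports Defs
begin

unbundle fps_syntax


definition ok :: "nat list \<Rightarrow> bool" where
  "ok p \<longleftrightarrow> (\<forall>a\<in>set p. 1 \<le> a \<and> a \<le> length p)"

lemma sep_one': "separable [Suc 0]" using sep_one by simp

lemma length_oplus[simp]: "length (oplus a b) = length a + length b"
  by (simp add: oplus_def)
lemma length_ominus[simp]: "length (ominus a b) = length a + length b"
  by (simp add: ominus_def)

lemma ok_oplus: "ok a \<Longrightarrow> ok b \<Longrightarrow> ok (oplus a b)"
  by (auto simp: ok_def oplus_def)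
lemma ok_ominus: "ok a \<Longrightarrow> ok b \<Longrightarrow> ok (ominus a b)"
  by (auto simp: ok_def ominus_def)

lemma sep_ok: "separable p \<Longrightarrow> ok p \<and> p \<noteq> []"
  by (induction rule: separable.induct) (auto simp: ok_oplus ok_ominus, auto simp: ok_def oplus_def ominus_def)

definition psplit :: "nat list \<Rightarrow> bool" where
  "psplit p \<longleftrightarrow> (\<exists>i. 2 \<le> i \<and> i \<le> length p \<and>
        (\<forall>a \<in> set (take (i - 1) p). \<forall>b \<in> set (drop (i - 1) p). a < b))"
definition msplit :: "nat list \<Rightarrow> bool" where
  "msplit p \<longleftrightarrow> (\<exists>i. 2 \<le> i \<and> i \<le> length p \<and>
        (\<forall>a \<in> set (take (i - 1) p). \<forall>b \<in> set (drop (i - 1) p). b < a))"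

lemma irr_iff: "irreducible_perm p \<longleftrightarrow> p = [1] \<or> (2 \<le> length p \<and> \<not> psplit p)"
  by (simp add: irreducible_perm_def psplit_def)

lemma psplit_app: "a \<noteq> [] \<Longrightarrow> c \<noteq> [] \<Longrightarrow> \<forall>x\<in>set a. \<forall>y\<in>set c. x < y \<Longrightarrow> psplit (a @ c)"
  unfolding psplit_def
  apply (rule exI[of _ "length a + 1"])
  by (auto simp: Suc_le_eq)

lemma msplit_app: "a \<noteq> [] \<Longrightarrow> c \<noteq> [] \<Longrightarrow> \<forall>x\<in>set a. \<forall>y\<in>set c. y < x \<Longrightarrow> msplit (a @ c)"
  unfolding msplit_def
  apply (rule exI[of _ "length a + 1"])
  by (auto simp: Suc_le_eq)

lemma hd_last_split:
  assumes "2 \<le> i" "i \<le> length p"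
  shows "hd p \<in> set (take (i - 1) p)" "last p \<in> set (drop (i - 1) p)"
proof -
  have "take (i - 1) p \<noteq> []" using assms by auto
  hence "hd (take (i - 1) p) \<in> set (take (i - 1) p)" by (rule hd_in_set)
  moreover have "hd (take (i - 1) p) = hd p" using assms by (intro hd_take) simp
  ultimately show "hd p \<in> set (take (i - 1) p)" by simp
  have "drop (i - 1) p \<noteq> []" using assms by auto
  hence "last (drop (i - 1) p) \<in> set (drop (i - 1) p)" by (rule last_in_set)
  thus "last p \<in> set (drop (i - 1) p)" using assms by simp
qed

lemma psplit_msplit: "psplit p \<Longrightarrow> msplit p \<Longrightarrow> False"
proof -
  assume "psplit p" "msplit p"
  then obtain i j where i: "2 \<le> i" "i \<le> length p" "\<forall>a \<in> set (take (i - 1) p). \<forall>b \<in> set (drop (i - 1) p). a < b"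
    and j: "2 \<le> j" "j \<le> length p" "\<forall>a \<in> set (take (j - 1) p). \<forall>b \<in> set (drop (j - 1) p). b < a"
    unfolding psplit_def msplit_def by blast
  have "hd p < last p" using i hd_last_split[OF i(1,2)] by blast
  moreover have "last p < hd p" using j hd_last_split[OF j(1,2)] by blast
  ultimately show False by simp
qed

lemma msplit_shift: "msplit (map (\<lambda>a. a + c) q) \<Longrightarrow> msplit q"
  unfolding msplit_def by (auto simp: take_map drop_map)

lemma psplit_len: "psplit p \<Longrightarrow> 2 \<le> length p"
  unfolding psplit_def by auto
lemma msplit_len: "msplit p \<Longrightarrow> 2 \<le> length p"
  unfolding msplit_def by auto

lemma psplit_oplus: "ok a \<Longrightarrow> ok b \<Longrightarrow> a \<noteq> [] \<Longrightarrow> b \<noteq> [] \<Longrightarrow> psplit (oplus a b)"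
  unfolding oplus_def by (rule psplit_app) (auto simp: ok_def, fastforce)
lemma msplit_ominus: "ok a \<Longrightarrow> ok b \<Longrightarrow> a \<noteq> [] \<Longrightarrow> b \<noteq> [] \<Longrightarrow> msplit (ominus a b)"
  unfolding ominus_def by (rule msplit_app) (auto simp: ok_def, fastforce)

definition RED where "RED p \<longleftrightarrow> separable p \<and> reducible_perm p"
definition IRR where "IRR p \<longleftrightarrow> separable p \<and> irreducible_perm p"
definition SD where "SD p \<longleftrightarrow> (\<exists>a b. separable a \<and> separable b \<and> p = ominus a b)"
definition MM where "MM p \<longleftrightarrow> p = [1] \<or> RED p"

lemma sep_cases: "separable p \<Longrightarrow> p = [1] \<or> (\<exists>a b. separable a \<and> separable b \<and> p = oplus a b)
   \<or> (\<exists>a b. separable a \<and> separable b \<and> p = ominus a b)"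
  by (erule separable.cases) auto

lemma RED_iff: "RED p \<longleftrightarrow> (\<exists>a b. separable a \<and> separable b \<and> p = oplus a b)"
proof
  assume "RED p"
  hence s: "separable p" and r: "2 \<le> length p" "\<not> irreducible_perm p"
    by (auto simp: RED_def reducible_perm_def)
  hence ps: "psplit p" by (auto simp: irr_iff)
  from sep_cases[OF s] show "\<exists>a b. separable a \<and> separable b \<and> p = oplus a b"
  proof (elim disjE)
    assume "p = [1]" thus ?thesis using r by simp
  next
    assume "\<exists>a b. separable a \<and> separable b \<and> p = oplus a b" thus ?thesis .
  next
    assume "\<exists>a b. separable a \<and> separable b \<and> p = ominus a b"
    then obtain a b where "separable a" "separable b" "p = ominus a b" by blast
    hence "msplit p" using msplit_ominus sep_ok by blast
    thus ?thesis using ps psplit_msplit by blast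
  qed
next
  assume "\<exists>a b. separable a \<and> separable b \<and> p = oplus a b"
  then obtain a b where ab: "separable a" "separable b" "p = oplus a b" by blast
  hence "psplit p" using psplit_oplus sep_ok by blast
  moreover have "separable p" using ab sep_oplus by simp
  ultimately show "RED p" using psplit_len[of p]
    by (auto simp: RED_def reducible_perm_def irr_iff)
qed

lemma IRR_iff: "IRR p \<longleftrightarrow> p = [1] \<or> SD p"
proof
  assume "IRR p"
  hence s: "separable p" and r: "irreducible_perm p" by (auto simp: IRR_def)
  from sep_cases[OF s] show "p = [1] \<or> SD p"
  proof (elim disjE)
    assume "\<exists>a b. separable a \<and> separable b \<and> p = oplus a b"
    then obtain a b where "separable a" "separable b" "p = oplus a b" by blast
    hence "psplit p" using psplit_oplus sep_ok by blast
    thus ?thesis using r psplit_len by (auto simp: irr_iff)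
  qed (auto simp: SD_def)
next
  assume "p = [1] \<or> SD p"
  thus "IRR p"
  proof
    assume "SD p"
    then obtain a b where ab: "separable a" "separable b" "p = ominus a b" by (auto simp: SD_def)
    hence "msplit p" using msplit_ominus sep_ok by blast
    moreover have "separable p" using ab sep_ominus by simp
    ultimately show "IRR p" using psplit_msplit msplit_len
      by (auto simp: IRR_def irr_iff)
  qed (auto simp: IRR_def irr_iff intro: sep_one')
qed

lemma SD_sep: "SD p \<Longrightarrow> separable p"
  by (auto simp: SD_def intro: sep_ominus)
lemma SD_not1: "SD p \<Longrightarrow> p \<noteq> [1]"
proof
  assume "SD p" "p = [1]"
  then obtain a b where ab: "separable a" "separable b" "p = ominus a b" by (auto simp: SD_def)
  hence l: "length p = length a + length b" by simp
  have "length a > 0" "length b > 0" using sep_ok[of a] sep_ok[of b] ab by auto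
  hence "2 \<le> length p" using l by linarith
  thus False using \<open>p = [1]\<close> by simp
qed
lemma RED_sep: "RED p \<Longrightarrow> separable p" by (simp add: RED_def)
lemma IRR_sep: "IRR p \<Longrightarrow> separable p" by (simp add: IRR_def)
lemma RED_not1: "RED p \<Longrightarrow> p \<noteq> [1]" by (auto simp: RED_def reducible_perm_def)
lemma MM_sep: "MM p \<Longrightarrow> separable p" by (auto simp: MM_def RED_def intro: sep_one')
lemma RED_psplit: "RED p \<Longrightarrow> psplit p"
  by (auto simp: RED_def reducible_perm_def irr_iff)

lemma ok_len1: "ok p \<Longrightarrow> length p = 1 \<Longrightarrow> p = [1]"
  by (cases p) (auto simp: ok_def)

lemma SEP_iff: "separable p \<longleftrightarrow> IRR p \<or> RED p"
proof -
  { assume s: "separable p" "\<not> IRR p"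
    hence "p \<noteq> [1]" by (auto simp: IRR_def irr_iff)
    hence "2 \<le> length p" using sep_ok[OF s(1)] ok_len1
      by (metis One_nat_def Suc_1 length_0_conv less_2_cases not_less)
    hence "RED p" using s by (auto simp: RED_def IRR_def reducible_perm_def) }
  thus ?thesis by (auto simp: IRR_def RED_def)
qed

lemma IRR_RED_disj: "IRR p \<Longrightarrow> RED p \<Longrightarrow> False"
  by (auto simp: IRR_def RED_def reducible_perm_def)

lemma oplus_assoc: "oplus (oplus a b) c = oplus a (oplus b c)"
  by (simp add: oplus_def add.assoc)
lemma ominus_assoc: "ominus (ominus a b) c = ominus a (ominus b c)"
  by (simp add: ominus_def add.assoc add.commute)

lemma RED_decomp_aux:
  "separable a \<Longrightarrow> separable b \<Longrightarrow> \<exists>\<alpha> \<beta>. IRR \<alpha> \<and> separable \<beta> \<and> oplus a b = oplus \<alpha> \<beta>"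
proof (induction "length a" arbitrary: a b rule: less_induct)
  case less
  show ?case
  proof (cases "IRR a")
    case True thus ?thesis using less by blast
  next
    case False
    hence "RED a" using less SEP_iff by blast
    then obtain a1 a2 where a: "separable a1" "separable a2" "a = oplus a1 a2" by (auto simp: RED_iff)
    have "length a1 < length a" using a sep_ok[OF a(2)] by simp
    moreover have "separable (oplus a2 b)" using a less by (simp add: sep_oplus)
    ultimately obtain \<alpha> \<beta> where "IRR \<alpha> \<and> separable \<beta> \<and> oplus a1 (oplus a2 b) = oplus \<alpha> \<beta>"
      using less a by blast
    thus ?thesis using a oplus_assoc by metis
  qed
qed

lemma SD_decomp_aux:
  "separable a \<Longrightarrow> separable b \<Longrightarrow> \<exists>\<alpha> \<beta>. MM \<alpha> \<and> separable \<beta> \<and> ominus a b = ominus \<alpha> \<beta>"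
proof (induction "length a" arbitrary: a b rule: less_induct)
  case less
  show ?case
  proof (cases "MM a")
    case True thus ?thesis using less by blast
  next
    case False
    hence "SD a" using less SEP_iff IRR_iff by (auto simp: MM_def)
    then obtain a1 a2 where a: "separable a1" "separable a2" "a = ominus a1 a2" by (auto simp: SD_def)
    have "length a1 < length a" using a sep_ok[OF a(2)] by simp
    moreover have "separable (ominus a2 b)" using a less by (simp add: sep_ominus)
    ultimately obtain \<alpha> \<beta> where "MM \<alpha> \<and> separable \<beta> \<and> ominus a1 (ominus a2 b) = ominus \<alpha> \<beta>"
      using less a by blast
    thus ?thesis using a ominus_assoc by metis
  qed
qed

lemma RED_decomp: "RED p \<longleftrightarrow> (\<exists>\<alpha> \<beta>. IRR \<alpha> \<and> separable \<beta> \<and> p = oplus \<alpha> \<beta>)"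
  using RED_decomp_aux RED_iff IRR_sep by metis

lemma SD_decomp: "SD p \<longleftrightarrow> (\<exists>\<alpha> \<beta>. MM \<alpha> \<and> separable \<beta> \<and> p = ominus \<alpha> \<beta>)"
  using SD_decomp_aux SD_def MM_sep by metis


lemma RED_inj_aux:
  assumes "IRR a'" "a @ us = a'" "us \<noteq> []" "a \<noteq> []" "\<forall>x\<in>set a. \<forall>y\<in>set us. x < y"
  shows False
proof -
  have "psplit a'" using assms psplit_app by blast
  moreover have "irreducible_perm a'" using assms by (simp add: IRR_def)
  ultimately show False using psplit_len[of a'] by (auto simp: irr_iff)
qed

lemma RED_inj_lt:
  assumes "IRR a" "IRR a'" "separable b" "separable b'" "oplus a b = oplus a' b'"
    "length a < length a'"
  shows False
proof -
  have e: "a @ map (\<lambda>x. x + length a) b = a' @ map (\<lambda>x. x + length a') b'"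
    using assms by (simp add: oplus_def)
  then obtain us where us: "a @ us = a'" "map (\<lambda>x. x + length a) b = us @ map (\<lambda>x. x + length a') b'"
    using assms(6) by (auto simp: append_eq_append_conv2)
  have "us \<noteq> []"
  proof
    assume "us = []"
    hence "length a = length a'" using us(1) by (metis append_Nil2 length_map)
    thus False using assms(6) by simp
  qed
  moreover have "a \<noteq> []" using sep_ok assms IRR_sep by blast
  moreover have "\<forall>x\<in>set a. \<forall>y\<in>set us. x < y"
  proof (intro ballI)
    fix x y assume "x \<in> set a" "y \<in> set us"
    hence "y \<in> set (map (\<lambda>x. x + length a) b)" using us by simp
    then obtain z where "z \<in> set b" "y = z + length a" by auto
    moreover have "ok a" "ok b" using sep_ok IRR_sep assms(1,3) by blast+
    hence "x \<le> length a" "1 \<le> z" using \<open>x \<in> set a\<close> \<open>z \<in> set b\<close>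
      by (simp_all add: ok_def)
    ultimately show "x < y" by simp
  qed
  ultimately show False using RED_inj_aux[OF assms(2) us(1)] by blast
qed

lemma RED_inj:
  assumes "IRR a" "IRR a'" "separable b" "separable b'" "oplus a b = oplus a' b'"
  shows "a = a' \<and> b = b'"
proof -
  have "length a = length a'" using RED_inj_lt[OF assms] RED_inj_lt[OF assms(2,1,4,3) assms(5)[symmetric]]
    by (meson linorder_neqE_nat)
  thus ?thesis using assms(5) by (auto simp: oplus_def inj_map_eq_map inj_def)
qed

lemma SD_inj_lt:
  assumes "MM a" "MM a'" "separable b" "separable b'" "ominus a b = ominus a' b'"
    "length a < length a'"
  shows False
proof -
  have e: "map (\<lambda>x. x + length b) a @ b = map (\<lambda>x. x + length b') a' @ b'"
    using assms by (simp add: ominus_def)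
  have "\<exists>us. map (\<lambda>x. x + length b) a @ us = map (\<lambda>x. x + length b') a' \<and> b = us @ b'"
  proof -
    from e obtain us where "(map (\<lambda>x. x + length b) a = map (\<lambda>x. x + length b') a' @ us \<and> us @ b = b') \<or>
       (map (\<lambda>x. x + length b) a @ us = map (\<lambda>x. x + length b') a' \<and> b = us @ b')"
      unfolding append_eq_append_conv2 by blast
    moreover have "\<not> (map (\<lambda>x. x + length b) a = map (\<lambda>x. x + length b') a' @ us)"
    proof
      assume "map (\<lambda>x. x + length b) a = map (\<lambda>x. x + length b') a' @ us"
      hence "length a = length a' + length us" by (metis length_append length_map)
      thus False using assms(6) by simp
    qed
    ultimately show ?thesis by blast
  qed
  then obtain us where us: "map (\<lambda>x. x + length b) a @ us = map (\<lambda>x. x + length b') a'" "b = us @ b'"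
    by blast
  have "us \<noteq> []"
  proof
    assume "us = []"
    hence "length a = length a'" using us(1) by (metis append_Nil2 length_map)
    thus False using assms(6) by simp
  qed
  moreover have "a \<noteq> []" using sep_ok assms MM_sep by blast
  moreover have "\<forall>x\<in>set (map (\<lambda>x. x + length b) a). \<forall>y\<in>set us. y < x"
  proof (intro ballI)
    fix x y assume "x \<in> set (map (\<lambda>x. x + length b) a)" "y \<in> set us"
    then obtain z where z: "z \<in> set a" "x = z + length b" by auto
    have "ok a" "ok b" using sep_ok MM_sep assms(1,3) by blast+
    have "y \<in> set b" using \<open>y \<in> set us\<close> us(2) by simp
    have "y \<le> length b" using \<open>ok b\<close> \<open>y \<in> set b\<close> unfolding ok_def by blast
    moreover have "1 \<le> z" using \<open>ok a\<close> z(1) unfolding ok_def by blast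
    ultimately show "y < x" using z(2) by simp
  qed
  moreover have "map (\<lambda>x. x + length b) a \<noteq> []" using \<open>a \<noteq> []\<close> by simp
  ultimately have "msplit (map (\<lambda>x. x + length b) a @ us)" using msplit_app by blast
  hence "msplit (map (\<lambda>x. x + length b') a')" by (simp only: us(1))
  hence m: "msplit a'" by (rule msplit_shift)
  have "a' \<noteq> [1]" using msplit_len[OF m] by auto
  hence "RED a'" using assms by (simp add: MM_def)
  thus False using m RED_psplit psplit_msplit by blast
qed

lemma SD_inj:
  assumes "MM a" "MM a'" "separable b" "separable b'" "ominus a b = ominus a' b'"
  shows "a = a' \<and> b = b'"
proof -
  have l: "length a = length a'" using SD_inj_lt[OF assms] SD_inj_lt[OF assms(2,1,4,3) assms(5)[symmetric]]
    by (meson linorder_neqE_nat)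
  have e: "map (\<lambda>x. x + length b) a @ b = map (\<lambda>x. x + length b') a' @ b'"
    using assms(5) by (simp only: ominus_def)
  have "length (map (\<lambda>x. x + length b) a) = length (map (\<lambda>x. x + length b') a')" using l by simp
  hence "map (\<lambda>x. x + length b) a = map (\<lambda>x. x + length b') a' \<and> b = b'"
    using e append_eq_append_conv by blast
  hence m0: "map (\<lambda>x. x + length b) a = map (\<lambda>x. x + length b') a'" and bb: "b = b'" by blast+
  have "a = map (\<lambda>x. x - length b) (map (\<lambda>x. x + length b) a)" by (induct a) auto
  also have "\<dots> = map (\<lambda>x. x - length b) (map (\<lambda>x. x + length b') a')" by (simp only: m0)
  also have "\<dots> = a'" using bb by (induct a') auto
  finally have "a = a'" .
  thus ?thesis using bb by simp
qed


lemma card_shift: "card ((\<lambda>i. i + k) ` A) = card (A::nat set)"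
  by (rule card_image) (simp add: inj_on_def)

lemma lmax_append:
  assumes "\<forall>x\<in>set a. \<forall>y\<in>set d. x < y"
  shows "lmax (a @ d) = lmax a + lmax d"
proof -
  let ?A = "{i. i < length a \<and> (\<forall>j<i. a ! i > a ! j)}"
  let ?D = "{i. i < length d \<and> (\<forall>j<i. d ! i > d ! j)}"
  have "{i. i < length (a @ d) \<and> (\<forall>j<i. (a @ d) ! i > (a @ d) ! j)} = ?A \<union> (\<lambda>i. i + length a) ` ?D"
  proof (intro set_eqI iffI)
    fix i assume i: "i \<in> {i. i < length (a @ d) \<and> (\<forall>j<i. (a @ d) ! i > (a @ d) ! j)}"
    show "i \<in> ?A \<union> (\<lambda>i. i + length a) ` ?D"
    proof (cases "i < length a")
      case True thus ?thesis using i by (auto simp: nth_append)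
    next
      case False
      have "i - length a \<in> ?D"
      proof (safe)
        show "i - length a < length d" using i False by auto
        fix j assume "j < i - length a"
        thus "d ! (i - length a) > d ! j" using i False
          by (auto simp: nth_append dest!: spec[of _ "j + length a"])
      qed
      thus ?thesis using False by (auto intro!: image_eqI[of _ _ "i - length a"])
    qed
  next
    fix i assume "i \<in> ?A \<union> (\<lambda>i. i + length a) ` ?D"
    thus "i \<in> {i. i < length (a @ d) \<and> (\<forall>j<i. (a @ d) ! i > (a @ d) ! j)}"
    proof
      assume "i \<in> ?A" thus ?thesis by (auto simp: nth_append)
    next
      assume "i \<in> (\<lambda>i. i + length a) ` ?D"
      then obtain k where k: "k \<in> ?D" "i = k + length a" by auto
      show ?thesis
      proof (safe)
        show "i < length (a @ d)" using k by simp
        fix j assume j: "j < i"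
        show "(a @ d) ! i > (a @ d) ! j"
        proof (cases "j < length a")
          case True
          thus ?thesis using k assms by (auto simp: nth_append)
        next
          case False
          thus ?thesis using k j by (auto simp: nth_append)
        qed
      qed
    qed
  qed
  moreover have "?A \<inter> (\<lambda>i. i + length a) ` ?D = {}" by auto
  ultimately show ?thesis unfolding lmax_def
    by (simp add: card_Un_disjoint card_shift)
qed

lemma lmin_append:
  assumes "\<forall>x\<in>set a. \<forall>y\<in>set d. x < y" "a \<noteq> []"
  shows "lmin (a @ d) = lmin a"
proof -
  have "{i. i < length (a @ d) \<and> (\<forall>j<i. (a @ d) ! i < (a @ d) ! j)} =
        {i. i < length a \<and> (\<forall>j<i. a ! i < a ! j)}"
  proof (intro set_eqI iffI)
    fix i assume i: "i \<in> {i. i < length (a @ d) \<and> (\<forall>j<i. (a @ d) ! i < (a @ d) ! j)}"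
    have "i < length a"
    proof (rule ccontr)
      assume "\<not> i < length a"
      have "0 < length a" using assms(2) by simp
      hence "0 < i" using \<open>\<not> i < length a\<close> by linarith
      have "(a @ d) ! i \<in> set d" using i \<open>\<not> i < length a\<close> by (auto simp: nth_append)
      hence "(a @ d) ! i \<in> set d" "0 < i" using \<open>0 < i\<close> by auto
      hence "(a @ d) ! i < (a @ d) ! 0" using i by auto
      moreover have "(a @ d) ! 0 \<in> set a" using assms(2) by (simp add: nth_append)
      ultimately show False using assms(1) \<open>(a @ d) ! i \<in> set d\<close> by force
    qed
    thus "i \<in> {i. i < length a \<and> (\<forall>j<i. a ! i < a ! j)}" using i by (auto simp: nth_append)
  next
    fix i assume "i \<in> {i. i < length a \<and> (\<forall>j<i. a ! i < a ! j)}"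
    thus "i \<in> {i. i < length (a @ d) \<and> (\<forall>j<i. (a @ d) ! i < (a @ d) ! j)}"
      by (auto simp: nth_append)
  qed
  thus ?thesis unfolding lmin_def by simp
qed

lemma rmax_append:
  assumes "\<forall>x\<in>set a. \<forall>y\<in>set d. x < y" "d \<noteq> []"
  shows "rmax (a @ d) = rmax d"
proof -
  let ?D = "{i. i < length d \<and> (\<forall>j. i < j \<and> j < length d \<longrightarrow> d ! i > d ! j)}"
  have "{i. i < length (a @ d) \<and> (\<forall>j. i < j \<and> j < length (a @ d) \<longrightarrow> (a @ d) ! i > (a @ d) ! j)} =
        (\<lambda>i. i + length a) ` ?D"
  proof (intro set_eqI iffI)
    fix i assume i: "i \<in> {i. i < length (a @ d) \<and> (\<forall>j. i < j \<and> j < length (a @ d) \<longrightarrow> (a @ d) ! i > (a @ d) ! j)}"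
    have "\<not> i < length a"
    proof
      assume il: "i < length a"
      hence "(a @ d) ! i \<in> set a" by (simp add: nth_append)
      moreover have "(a @ d) ! length a \<in> set d" using assms(2) by (simp add: nth_append)
      moreover have "(a @ d) ! i > (a @ d) ! length a" using i il assms(2) by auto
      ultimately show False using assms(1) by force
    qed
    have "i - length a \<in> ?D"
    proof safe
      show "i - length a < length d" using i \<open>\<not> i < length a\<close> by auto
      fix j assume "i - length a < j" "j < length d"
      with i \<open>\<not> i < length a\<close> have "(a @ d) ! i > (a @ d) ! (j + length a)" by auto
      thus "d ! (i - length a) > d ! j" using \<open>\<not> i < length a\<close> by (simp add: nth_append)
    qed
    thus "i \<in> (\<lambda>i. i + length a) ` ?D" using \<open>\<not> i < length a\<close>
      by (auto intro!: image_eqI[of _ _ "i - length a"])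
  next
    fix i assume "i \<in> (\<lambda>i. i + length a) ` ?D"
    then obtain k where k: "k \<in> ?D" "i = k + length a" by auto
    show "i \<in> {i. i < length (a @ d) \<and> (\<forall>j. i < j \<and> j < length (a @ d) \<longrightarrow> (a @ d) ! i > (a @ d) ! j)}"
    proof (safe)
      show "i < length (a @ d)" using k by simp
      fix j assume "i < j" "j < length (a @ d)"
      thus "(a @ d) ! i > (a @ d) ! j" using k by (auto simp: nth_append dest!: spec[of _ "j - length a"])
    qed
  qed
  thus ?thesis unfolding rmax_def by (simp add: card_shift)
qed

lemma rmin_append:
  assumes "\<forall>x\<in>set a. \<forall>y\<in>set d. x < y"
  shows "rmin (a @ d) = rmin a + rmin d"
proof -
  let ?A = "{i. i < length a \<and> (\<forall>j. i < j \<and> j < length a \<longrightarrow> a ! i < a ! j)}"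
  let ?D = "{i. i < length d \<and> (\<forall>j. i < j \<and> j < length d \<longrightarrow> d ! i < d ! j)}"
  have "{i. i < length (a @ d) \<and> (\<forall>j. i < j \<and> j < length (a @ d) \<longrightarrow> (a @ d) ! i < (a @ d) ! j)} =
        ?A \<union> (\<lambda>i. i + length a) ` ?D"
  proof (intro set_eqI iffI)
    fix i assume i: "i \<in> {i. i < length (a @ d) \<and> (\<forall>j. i < j \<and> j < length (a @ d) \<longrightarrow> (a @ d) ! i < (a @ d) ! j)}"
    show "i \<in> ?A \<union> (\<lambda>i. i + length a) ` ?D"
    proof (cases "i < length a")
      case True
      have "i \<in> ?A"
      proof (safe)
        show "i < length a" by fact
        fix j assume "i < j" "j < length a"
        thus "a ! i < a ! j" using i True by (auto simp: nth_append dest!: spec[of _ j])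
      qed
      thus ?thesis by blast
    next
      case False
      have "i - length a \<in> ?D"
      proof safe
        show "i - length a < length d" using i False by auto
        fix j assume "i - length a < j" "j < length d"
        with i False have "(a @ d) ! i < (a @ d) ! (j + length a)" by auto
        thus "d ! (i - length a) < d ! j" using False by (simp add: nth_append)
      qed
      thus ?thesis using False by (auto intro!: image_eqI[of _ _ "i - length a"])
    qed
  next
    fix i assume "i \<in> ?A \<union> (\<lambda>i. i + length a) ` ?D"
    thus "i \<in> {i. i < length (a @ d) \<and> (\<forall>j. i < j \<and> j < length (a @ d) \<longrightarrow> (a @ d) ! i < (a @ d) ! j)}"
    proof
      assume iA: "i \<in> ?A"
      show ?thesis
      proof (safe)
        show "i < length (a @ d)" using iA by simp
        fix j assume j: "i < j" "j < length (a @ d)"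
        show "(a @ d) ! i < (a @ d) ! j"
        proof (cases "j < length a")
          case True thus ?thesis using iA j by (auto simp: nth_append)
        next
          case False
          hence "(a @ d) ! j \<in> set d" using j by (auto simp: nth_append)
          moreover have "(a @ d) ! i \<in> set a" using iA by (auto simp: nth_append)
          ultimately show ?thesis using assms by blast
        qed
      qed
    next
      assume "i \<in> (\<lambda>i. i + length a) ` ?D"
      then obtain k where k: "k \<in> ?D" "i = k + length a" by auto
      show ?thesis
      proof (safe)
        show "i < length (a @ d)" using k by simp
        fix j assume "i < j" "j < length (a @ d)"
        thus "(a @ d) ! i < (a @ d) ! j" using k by (auto simp: nth_append dest!: spec[of _ "j - length a"])
      qed
    qed
  qed
  moreover have "?A \<inter> (\<lambda>i. i + length a) ` ?D = {}" by auto
  ultimately show ?thesis unfolding rmin_def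
    by (simp add: card_Un_disjoint card_shift)
qed

lemma stats_shift:
  "lmax (map (\<lambda>x. x + c) p) = lmax p" "rmax (map (\<lambda>x. x + c) p) = rmax p"
  "lmin (map (\<lambda>x. x + c) p) = lmin p" "rmin (map (\<lambda>x. x + c) p) = rmin p"
  unfolding lmax_def rmax_def lmin_def rmin_def
  by (auto intro!: arg_cong[where f=card])


lemma rev_set_eq:
  fixes R :: "nat \<Rightarrow> nat \<Rightarrow> bool"
  shows "{i. i < length p \<and> (\<forall>j<i. R (rev p ! i) (rev p ! j))} =
    (\<lambda>i. length p - Suc i) ` {i. i < length p \<and> (\<forall>j. i < j \<and> j < length p \<longrightarrow> R (p ! i) (p ! j))}"
proof (intro set_eqI iffI)
  fix i assume i: "i \<in> {i. i < length p \<and> (\<forall>j<i. R (rev p ! i) (rev p ! j))}"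
  have "length p - Suc i \<in> {i. i < length p \<and> (\<forall>j. i < j \<and> j < length p \<longrightarrow> R (p ! i) (p ! j))}"
  proof safe
    show "length p - Suc i < length p" using i by auto
    fix j assume j: "length p - Suc i < j" "j < length p"
    have "R (rev p ! i) (rev p ! (length p - Suc j))" using i j by auto
    thus "R (p ! (length p - Suc i)) (p ! j)" using i j by (simp add: rev_nth)
  qed
  moreover have "i = length p - Suc (length p - Suc i)" using i by auto
  ultimately show "i \<in> (\<lambda>i. length p - Suc i) ` {i. i < length p \<and> (\<forall>j. i < j \<and> j < length p \<longrightarrow> R (p ! i) (p ! j))}"
    by blast
next
  fix i assume "i \<in> (\<lambda>i. length p - Suc i) ` {i. i < length p \<and> (\<forall>j. i < j \<and> j < length p \<longrightarrow> R (p ! i) (p ! j))}"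
  then obtain k where k: "k < length p" "\<forall>j. k < j \<and> j < length p \<longrightarrow> R (p ! k) (p ! j)" "i = length p - Suc k"
    by auto
  show "i \<in> {i. i < length p \<and> (\<forall>j<i. R (rev p ! i) (rev p ! j))}"
  proof safe
    show "i < length p" using k by auto
    fix j assume j: "j < i"
    have "k < length p - Suc j" "length p - Suc j < length p" using k j by auto
    hence "R (p ! k) (p ! (length p - Suc j))" using k(2) by blast
    thus "R (rev p ! i) (rev p ! j)" using k j by (simp add: rev_nth Suc_diff_Suc)
  qed
qed

lemma card_rev_img:
  "card ((\<lambda>i. length p - Suc i) ` {i. i < length p \<and> Q i}) = card {i. i < length p \<and> Q i}"
  by (rule card_image) (auto simp: inj_on_def)

lemma lmax_rev: "lmax (rev p) = rmax p"
  using rev_set_eq[of p "(>)"] unfolding lmax_def rmax_def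
  by (simp only: length_rev card_rev_img)
lemma lmin_rev: "lmin (rev p) = rmin p"
  using rev_set_eq[of p "(<)"] unfolding lmin_def rmin_def
  by (simp only: length_rev card_rev_img)
lemma rmax_rev: "rmax (rev p) = lmax p"
  using lmax_rev[of "rev p"] by simp
lemma rmin_rev: "rmin (rev p) = lmin p"
  using lmin_rev[of "rev p"] by simp

definition compl :: "nat list \<Rightarrow> nat list" where
  "compl p = map (\<lambda>a. Suc (length p) - a) p"

lemma rmin_compl: "ok p \<Longrightarrow> rmin (compl p) = rmax p"
  unfolding rmin_def rmax_def compl_def
proof (rule arg_cong[where f=card])
  assume "ok p"
  hence b: "\<And>i. i < length p \<Longrightarrow> p ! i \<le> length p" by (auto simp: ok_def)
  have k: "\<And>a b n. a \<le> n \<Longrightarrow> b \<le> n \<Longrightarrow> (Suc n - a < Suc n - b) = (b < a)" by arith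
  show "{i. i < length (map (\<lambda>a. Suc (length p) - a) p) \<and>
        (\<forall>j. i < j \<and> j < length (map (\<lambda>a. Suc (length p) - a) p) \<longrightarrow>
             map (\<lambda>a. Suc (length p) - a) p ! i < map (\<lambda>a. Suc (length p) - a) p ! j)} =
    {i. i < length p \<and> (\<forall>j. i < j \<and> j < length p \<longrightarrow> p ! j < p ! i)}"
    using b by (auto simp: k)
qed

lemma length_compl[simp]: "length (compl p) = length p" by (simp add: compl_def)
lemma ok_compl: "ok p \<Longrightarrow> ok (compl p)" by (auto simp: ok_def compl_def)
lemma compl_compl: "ok p \<Longrightarrow> compl (compl p) = p"
  by (auto simp: ok_def compl_def intro!: map_idI)
lemma ok_rev[simp]: "ok (rev p) = ok p" by (simp add: ok_def)

lemma compl_oplus: "ok a \<Longrightarrow> ok b \<Longrightarrow> compl (oplus a b) = ominus (compl a) (compl b)"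
  by (auto simp: ok_def compl_def oplus_def ominus_def)
lemma compl_ominus: "ok a \<Longrightarrow> ok b \<Longrightarrow> compl (ominus a b) = oplus (compl a) (compl b)"
  by (auto simp: ok_def compl_def oplus_def ominus_def)

lemma rev_oplus: "rev (oplus a b) = ominus (rev b) (rev a)"
  by (simp add: oplus_def ominus_def rev_map)
lemma rev_ominus: "rev (ominus a b) = oplus (rev b) (rev a)"
  by (simp add: oplus_def ominus_def rev_map)

lemma sep_rev: "separable p \<Longrightarrow> separable (rev p)"
  by (induction rule: separable.induct) (auto simp: rev_oplus rev_ominus sep_one' intro: separable.intros)

lemma sep_compl: "separable p \<Longrightarrow> separable (compl p)"
proof (induction rule: separable.induct)
  case sep_one thus ?case by (simp add: compl_def sep_one')
next
  case (sep_oplus p s) thus ?case by (simp add: compl_oplus sep_ok separable.sep_ominus)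
next
  case (sep_ominus p s) thus ?case by (simp add: compl_ominus sep_ok separable.sep_oplus)
qed

lemma oplus_lt: "ok a \<Longrightarrow> ok b \<Longrightarrow> \<forall>x\<in>set a. \<forall>y\<in>set (map (\<lambda>x. x + length a) b). x < y"
  by (auto simp: ok_def) fastforce

lemma oplus_stats:
  assumes "ok a" "ok b" "a \<noteq> []" "b \<noteq> []"
  shows "lmax (oplus a b) = lmax a + lmax b" "rmax (oplus a b) = rmax b"
    "lmin (oplus a b) = lmin a" "rmin (oplus a b) = rmin a + rmin b"
  using oplus_lt[OF assms(1,2)] assms(3,4) unfolding oplus_def
  by (simp_all add: lmax_append rmax_append lmin_append rmin_append stats_shift)

lemma ominus_rev: "ominus a b = rev (oplus (rev b) (rev a))"
  by (simp add: rev_oplus)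

lemma ominus_stats:
  assumes "ok a" "ok b" "a \<noteq> []" "b \<noteq> []"
  shows "lmax (ominus a b) = lmax a" "rmax (ominus a b) = rmax a + rmax b"
    "lmin (ominus a b) = lmin a + lmin b" "rmin (ominus a b) = rmin b"
  using oplus_stats[of "rev b" "rev a"] assms unfolding ominus_rev
  by (simp_all add: lmax_rev rmax_rev lmin_rev rmin_rev)

lemma stats_one: "lmax [1] = 1" "rmax [1] = 1" "lmin [1] = 1" "rmin [1] = 1"
proof -
  have e: "\<And>P. {i. i < length [1::nat] \<and> P i} = (if P 0 then {0} else {})" by auto
  show "lmax [1] = 1" "rmax [1] = 1" "lmin [1] = 1" "rmin [1] = 1"
    unfolding lmax_def rmax_def lmin_def rmin_def by (simp_all only: e) simp_all
qed


lemma GF_fin: "(\<And>p. P p \<Longrightarrow> separable p) \<Longrightarrow> finite {p. length p = n \<and> P p}"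
proof -
  assume h: "\<And>p. P p \<Longrightarrow> separable p"
  have "{p. length p = n \<and> P p} \<subseteq> {xs. set xs \<subseteq> {1..n} \<and> length xs = n}"
    using h sep_ok by (fastforce simp: ok_def)
  thus ?thesis by (rule finite_subset) (simp add: finite_lists_length_eq)
qed

lemma GF_nth: "GF P w $ n = sum w {p. length p = n \<and> P p}"
  by (simp add: GF_def)

lemma GF_conv:
  fixes f :: "nat list \<Rightarrow> nat list \<Rightarrow> nat list"
  assumes finA: "\<And>n. finite {p. length p = n \<and> A p}"
    and finB: "\<And>n. finite {p. length p = n \<and> B p}"
    and len: "\<And>a b. A a \<Longrightarrow> B b \<Longrightarrow> length (f a b) = length a + length b"
    and inj: "\<And>a b a' b'. A a \<Longrightarrow> B b \<Longrightarrow> A a' \<Longrightarrow> B b' \<Longrightarrow> f a b = f a' b' \<Longrightarrow> a = a' \<and> b = b'"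
    and C: "\<And>p. C p \<longleftrightarrow> (\<exists>a b. A a \<and> B b \<and> p = f a b)"
    and w: "\<And>a b. A a \<Longrightarrow> B b \<Longrightarrow> w (f a b) = w1 a * w2 b"
  shows "GF C w = GF A w1 * GF B w2"
proof (rule fps_ext)
  fix n
  let ?An = "\<lambda>i. {p. length p = i \<and> A p}"
  let ?Bn = "\<lambda>i. {p. length p = i \<and> B p}"
  define D where "D = {(a, b). A a \<and> B b \<and> length a + length b = n}"
  have D_eq: "D = (\<Union>i\<in>{0..n}. ?An i \<times> ?Bn (n - i))"
    unfolding D_def by auto
  have "(GF A w1 * GF B w2) $ n = (\<Sum>i=0..n. (\<Sum>a\<in>?An i. w1 a) * (\<Sum>b\<in>?Bn (n - i). w2 b))"
    by (simp add: fps_mult_nth GF_nth)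
  also have "\<dots> = (\<Sum>i=0..n. \<Sum>(a, b)\<in>?An i \<times> ?Bn (n - i). w1 a * w2 b)"
    by (simp add: sum_product sum.cartesian_product)
  also have "\<dots> = (\<Sum>(a, b)\<in>D. w1 a * w2 b)"
    unfolding D_eq
    by (rule sum.UNION_disjoint[symmetric]) (auto simp: finA finB)
  also have "\<dots> = (\<Sum>(a, b)\<in>D. w (f a b))"
    by (rule sum.cong) (auto simp: D_def w)
  also have "\<dots> = sum (w \<circ> case_prod f) D"
    by (rule sum.cong) auto
  also have "\<dots> = sum w (case_prod f ` D)"
  proof (rule sum.reindex[symmetric])
    show "inj_on (case_prod f) D"
      by (auto simp: inj_on_def D_def dest: inj)
  qed
  also have "case_prod f ` D = {p. length p = n \<and> C p}"
    unfolding D_def using C len by auto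
  finally show "GF C w $ n = (GF A w1 * GF B w2) $ n" by (simp add: GF_nth)
qed

lemma GF_disj:
  assumes "\<And>p. R p \<longleftrightarrow> P p \<or> Q p" "\<And>p. P p \<Longrightarrow> Q p \<Longrightarrow> False"
    "\<And>n. finite {p. length p = n \<and> P p}" "\<And>n. finite {p. length p = n \<and> Q p}"
  shows "GF R w = GF P w + GF Q w"
proof (rule fps_ext)
  fix n
  have "{p. length p = n \<and> R p} = {p. length p = n \<and> P p} \<union> {p. length p = n \<and> Q p}"
    using assms(1) by auto
  moreover have "sum w ({p. length p = n \<and> P p} \<union> {p. length p = n \<and> Q p}) =
     sum w {p. length p = n \<and> P p} + sum w {p. length p = n \<and> Q p}"
    by (rule sum.union_disjoint) (use assms in auto)
  ultimately show "GF R w $ n = (GF P w + GF Q w) $ n"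
    by (simp add: GF_nth)
qed

lemma GF_one: "GF (\<lambda>p. p = [1]) w = fps_const (w [1]) * fps_X"
proof (rule fps_ext)
  fix n
  have e: "{p. length p = n \<and> p = [1]} = (if n = 1 then {[1]} else {})" by auto
  show "GF (\<lambda>p. p = [1]) w $ n = (fps_const (w [1]) * fps_X) $ n"
    unfolding GF_nth e by simp
qed

lemma GF_cong: "(\<And>p. P p \<longleftrightarrow> Q p) \<Longrightarrow> (\<And>p. P p \<Longrightarrow> w p = w' p) \<Longrightarrow> GF P w = GF Q w'"
  unfolding GF_def by (rule arg_cong[where f=Abs_fps]) (auto intro!: sum.cong)

lemma GF_bij:
  assumes "\<And>p. Q p \<Longrightarrow> P (g p)" "\<And>p. P p \<Longrightarrow> Q (h p)"
    "\<And>p. Q p \<Longrightarrow> h (g p) = p" "\<And>p. P p \<Longrightarrow> g (h p) = p"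
    "\<And>p. Q p \<Longrightarrow> length (g p) = length p" "\<And>p. P p \<Longrightarrow> length (h p) = length p"
    "\<And>p. Q p \<Longrightarrow> w (g p) = w' p"
  shows "GF P w = GF Q w'"
proof (rule fps_ext)
  fix n
  have w2: "\<And>p. P p \<Longrightarrow> w' (h p) = w p" using assms by metis
  show "GF P w $ n = GF Q w' $ n"
    unfolding GF_nth
    by (rule sum.reindex_bij_witness[where i=g and j=h]) (auto simp: assms w2)
qed


lemma alg:
  fixes a b a1 T Sx Sy Su E :: "real fps"
  assumes A1: "b = fps_const (x*u) * fps_X + a*Sx"
    and A2: "a = fps_const (x*u) * fps_X + b*Su"
    and A3: "Sx = a1 + a1*Sx"
    and A4: "T = fps_const (x*y) * fps_X + (fps_const (x*y) * fps_X + a1*T)*Sy + a1*T"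
    and A5: "E = fps_const (x*y*u) * fps_X + a*T"
    and z: "Sx$0 = 0" "Sy$0 = 0" "Su$0 = 0"
  shows "E = fps_const (x*y*u) * fps_X + (Sx+1)*(Sy+1)*(Su+1)*fps_X^2*fps_const (x^2*y*u)
     * inverse ((1 - Sx*Su)*(1 - Sx*Sy))"
proof -
  define D where "D = (1 - Sx*Su)*(1 - Sx*Sy)"
  have D0: "D $ 0 \<noteq> 0" using z by (simp add: D_def)
  have iD: "inverse D * D = 1" using D0 by (rule inverse_mult_eq_1)
  have h1: "a * (1 - Sx*Su) = fps_const (x*u) * fps_X * (1 + Su)"
    using A1 A2 by algebra
  have h2: "T * (1 - Sx*Sy) = fps_const (x*y) * fps_X * (1 + Sx) * (1 + Sy)"
    using A3 A4 by algebra
  have cc: "fps_const (x*u) * fps_const (x*y) = fps_const (x^2*y*u)"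
    by (simp add: power2_eq_square mult_ac)
  have "a * T * D = (Sx+1)*(Sy+1)*(Su+1)*fps_X^2*fps_const (x^2*y*u)"
    unfolding D_def using h1 h2 cc by algebra
  hence "a * T = (Sx+1)*(Sy+1)*(Su+1)*fps_X^2*fps_const (x^2*y*u) * inverse D"
    using iD by algebra
  thus ?thesis using A5 by (simp add: D_def)
qed


lemma fin_sep: "finite {p. length p = n \<and> separable p}" by (rule GF_fin)
lemma fin_IRR: "finite {p. length p = n \<and> IRR p}" by (rule GF_fin) (rule IRR_sep)
lemma fin_RED: "finite {p. length p = n \<and> RED p}" by (rule GF_fin) (rule RED_sep)
lemma fin_SD: "finite {p. length p = n \<and> SD p}" by (rule GF_fin) (rule SD_sep)
lemma fin_MM: "finite {p. length p = n \<and> MM p}" by (rule GF_fin) (rule MM_sep)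
lemma fin_one: "finite {p. length p = n \<and> p = [1::nat]}" by (rule GF_fin) (simp add: sep_one')

lemma stats_one_Suc: "lmax [Suc 0] = 1" "rmax [Suc 0] = 1" "lmin [Suc 0] = 1" "rmin [Suc 0] = 1"
  using stats_one by simp_all

lemma RED_conv:
  assumes "\<And>a b. IRR a \<Longrightarrow> separable b \<Longrightarrow> w (oplus a b) = w1 a * w2 b"
  shows "GF RED w = GF IRR w1 * GF separable w2"
  by (rule GF_conv[where f=oplus]) (auto simp: fin_IRR fin_sep RED_decomp assms dest: RED_inj)

lemma SD_conv:
  assumes "\<And>a b. MM a \<Longrightarrow> separable b \<Longrightarrow> w (ominus a b) = w1 a * w2 b"
  shows "GF SD w = GF MM w1 * GF separable w2"
  by (rule GF_conv[where f=ominus]) (auto simp: fin_MM fin_sep SD_decomp assms dest: SD_inj)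

lemma GF_SEP_split: "GF separable w = GF IRR w + GF RED w"
  by (rule GF_disj) (auto simp: fin_IRR fin_RED SEP_iff dest: IRR_RED_disj)

lemma GF_IRR_split: "GF IRR w = fps_const (w [1]) * fps_X + GF SD w"
proof -
  have "GF IRR w = GF (\<lambda>p. p = [1]) w + GF SD w"
    by (rule GF_disj) (auto simp: fin_one fin_SD IRR_iff dest: SD_not1)
  thus ?thesis by (simp only: GF_one)
qed

lemma GF_MM_split: "GF MM w = fps_const (w [1]) * fps_X + GF RED w"
proof -
  have "GF MM w = GF (\<lambda>p. p = [1]) w + GF RED w"
    by (rule GF_disj) (auto simp: fin_one fin_RED MM_def dest: RED_not1)
  thus ?thesis by (simp only: GF_one)
qed

lemma Sz_lmax: "GF separable (\<lambda>p. x ^ lmax p) = S_z x"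
  unfolding S_z_def
  by (rule GF_bij[where g=rev and h=rev]) (auto simp: sep_rev lmax_rev)

lemma compl_rev: "compl (rev p) = rev (compl p)"
  by (simp add: compl_def rev_map)

lemma Sz_lmin: "GF separable (\<lambda>p. u ^ lmin p) = S_z u"
  unfolding S_z_def
proof (rule GF_bij[where g="\<lambda>p. rev (compl p)" and h="\<lambda>p. rev (compl p)"])
  fix p assume "separable p"
  thus "separable (rev (compl p))" by (simp add: sep_rev sep_compl)
  show "separable (rev (compl p))" by (simp add: sep_rev sep_compl \<open>separable p\<close>)
  show "rev (compl (rev (compl p))) = p" using sep_ok[OF \<open>separable p\<close>]
    by (simp add: compl_rev compl_compl)
  show "rev (compl (rev (compl p))) = p" using sep_ok[OF \<open>separable p\<close>]
    by (simp add: compl_rev compl_compl)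
  show "length (rev (compl p)) = length p" by simp
  show "length (rev (compl p)) = length p" by simp
  show "u ^ lmin (rev (compl p)) = u ^ rmax p" using sep_ok[OF \<open>separable p\<close>]
    by (simp add: lmin_rev rmin_compl)
qed

lemma Sz0: "S_z z $ 0 = 0"
proof -
  have e: "{p. length p = 0 \<and> separable p} = {}" using sep_ok by auto
  show ?thesis unfolding S_z_def GF_nth e by simp
qed

lemma MM_E: "GF MM (\<lambda>p. x ^ lmax p * y ^ rmax p * u ^ lmin p) = E_fps x y u"
proof -
  define a where "a = GF IRR (\<lambda>p. x ^ lmax p * u ^ lmin p)"
  define b where "b = GF MM (\<lambda>p. x ^ lmax p * u ^ lmin p)"
  define a1 where "a1 = GF IRR (\<lambda>p. x ^ lmax p)"
  define T where "T = GF separable (\<lambda>p. x ^ lmax p * y ^ rmax p)"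
  define E where "E = GF MM (\<lambda>p. x ^ lmax p * y ^ rmax p * u ^ lmin p)"
  have A1: "b = fps_const (x*u) * fps_X + a * S_z x"
  proof -
    have "GF RED (\<lambda>p. x ^ lmax p * u ^ lmin p) = a * GF separable (\<lambda>p. x ^ lmax p)"
      unfolding a_def
      by (rule RED_conv) (use sep_ok IRR_sep in \<open>auto simp: oplus_stats power_add mult_ac\<close>)
    thus ?thesis unfolding b_def by (simp add: GF_MM_split stats_one stats_one_Suc Sz_lmax)
  qed
  have A2: "a = fps_const (x*u) * fps_X + b * S_z u"
  proof -
    have "GF SD (\<lambda>p. x ^ lmax p * u ^ lmin p) = b * GF separable (\<lambda>p. u ^ lmin p)"
      unfolding b_def
      by (rule SD_conv) (use sep_ok MM_sep in \<open>auto simp: ominus_stats power_add mult_ac\<close>)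
    thus ?thesis unfolding a_def by (simp add: GF_IRR_split stats_one stats_one_Suc Sz_lmin)
  qed
  have A3: "S_z x = a1 + a1 * S_z x"
  proof -
    have "GF RED (\<lambda>p. x ^ lmax p) = a1 * GF separable (\<lambda>p. x ^ lmax p)"
      unfolding a1_def
      by (rule RED_conv) (use sep_ok IRR_sep in \<open>auto simp: oplus_stats power_add mult_ac\<close>)
    thus ?thesis unfolding a1_def
      by (metis GF_SEP_split Sz_lmax)
  qed
  have R: "GF RED (\<lambda>p. x ^ lmax p * y ^ rmax p) = a1 * T"
    unfolding a1_def T_def
    by (rule RED_conv) (use sep_ok IRR_sep in \<open>auto simp: oplus_stats power_add mult_ac\<close>)
  have SDe: "GF SD (\<lambda>p. x ^ lmax p * y ^ rmax p) = GF MM (\<lambda>p. x ^ lmax p * y ^ rmax p) * S_z y"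
    unfolding S_z_def
    by (rule SD_conv) (use sep_ok MM_sep in \<open>auto simp: ominus_stats power_add mult_ac\<close>)
  have A4: "T = fps_const (x*y) * fps_X + (fps_const (x*y) * fps_X + a1*T) * S_z y + a1*T"
  proof -
    have "T = GF IRR (\<lambda>p. x ^ lmax p * y ^ rmax p) + GF RED (\<lambda>p. x ^ lmax p * y ^ rmax p)"
      unfolding T_def by (rule GF_SEP_split)
    also have "GF IRR (\<lambda>p. x ^ lmax p * y ^ rmax p) = fps_const (x*y) * fps_X + (fps_const (x*y) * fps_X + a1*T) * S_z y"
      by (simp add: GF_IRR_split GF_MM_split SDe R stats_one stats_one_Suc)
    finally show ?thesis using R by simp
  qed
  have A5: "E = fps_const (x*y*u) * fps_X + a*T"
  proof -
    have "GF RED (\<lambda>p. x ^ lmax p * y ^ rmax p * u ^ lmin p) = a * T"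
      unfolding a_def T_def
      by (rule RED_conv) (use sep_ok IRR_sep in \<open>auto simp: oplus_stats power_add mult_ac\<close>)
    thus ?thesis unfolding E_def by (simp add: GF_MM_split stats_one stats_one_Suc)
  qed
  have "E = E_fps x y u"
    unfolding E_fps_def by (rule alg[OF A1 A2 A3 A4 A5 Sz0 Sz0 Sz0])
  thus ?thesis by (simp add: E_def)
qed

lemma IRR_eq: "(\<lambda>p. separable p \<and> irreducible_perm p) = IRR"
  by (rule ext) (simp add: IRR_def)
lemma RED_eq: "(\<lambda>p. separable p \<and> reducible_perm p) = RED"
  by (rule ext) (simp add: RED_def)

lemma SD_rev_RED: "SD p \<Longrightarrow> RED (rev p)"
proof -
  assume "SD p"
  then obtain a b where ab: "separable a" "separable b" "p = ominus a b" by (auto simp: SD_def)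
  hence "rev p = oplus (rev b) (rev a)" by (simp add: rev_ominus)
  thus "RED (rev p)" unfolding RED_iff using ab sep_rev by blast
qed
lemma RED_rev_SD: "RED p \<Longrightarrow> SD (rev p)"
proof -
  assume "RED p"
  then obtain a b where ab: "separable a" "separable b" "p = oplus a b" by (auto simp: RED_iff)
  hence "rev p = ominus (rev b) (rev a)" by (simp add: rev_oplus)
  thus "SD (rev p)" unfolding SD_def using ab sep_rev by blast
qed

theorem theorem9:
  fixes x y u v :: real
  shows
    "GF (\<lambda>p. separable p \<and> irreducible_perm p)
        (\<lambda>p. x ^ lmax p * y ^ rmax p * u ^ lmin p * v ^ rmin p)
     = fps_const (x * y * u * v) * fps_X
       + E_fps x y u * GF separable (\<lambda>p. y ^ rmax p * u ^ lmin p * v ^ rmin p)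
   \<and> GF (\<lambda>p. separable p \<and> reducible_perm p)
        (\<lambda>p. x ^ lmax p * y ^ rmax p * u ^ lmin p * v ^ rmin p)
     = E_fps y x v * GF separable (\<lambda>p. x ^ lmax p * u ^ lmin p * v ^ rmin p)
   \<and> GF separable (\<lambda>p. x ^ lmax p * y ^ rmax p * u ^ lmin p * v ^ rmin p)
     = fps_const (x * y * u * v) * fps_X
       + E_fps x y u * GF separable (\<lambda>p. y ^ rmax p * u ^ lmin p * v ^ rmin p)
       + E_fps y x v * GF separable (\<lambda>p. x ^ lmax p * u ^ lmin p * v ^ rmin p)"
proof -
  let ?w = "\<lambda>p. x ^ lmax p * y ^ rmax p * u ^ lmin p * v ^ rmin p"
  have I: "GF IRR ?w = fps_const (x * y * u * v) * fps_X
       + E_fps x y u * GF separable (\<lambda>p. y ^ rmax p * u ^ lmin p * v ^ rmin p)"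
  proof -
    have "GF SD ?w = GF MM (\<lambda>p. x ^ lmax p * y ^ rmax p * u ^ lmin p)
        * GF separable (\<lambda>p. y ^ rmax p * u ^ lmin p * v ^ rmin p)"
      by (rule SD_conv) (use sep_ok MM_sep in \<open>auto simp: ominus_stats power_add mult_ac\<close>)
    thus ?thesis by (simp add: GF_IRR_split stats_one stats_one_Suc MM_E)
  qed
  have R: "GF RED ?w = E_fps y x v * GF separable (\<lambda>p. x ^ lmax p * u ^ lmin p * v ^ rmin p)"
  proof -
    have "GF RED ?w = GF SD (\<lambda>p. x ^ rmax p * y ^ lmax p * u ^ rmin p * v ^ lmin p)"
      by (rule GF_bij[where g=rev and h=rev])
         (auto simp: SD_rev_RED RED_rev_SD lmax_rev rmax_rev lmin_rev rmin_rev)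
    also have "\<dots> = GF MM (\<lambda>p. y ^ lmax p * x ^ rmax p * v ^ lmin p)
        * GF separable (\<lambda>p. x ^ rmax p * v ^ lmin p * u ^ rmin p)"
      by (rule SD_conv) (use sep_ok MM_sep in \<open>auto simp: ominus_stats power_add mult_ac\<close>)
    also have "GF separable (\<lambda>p. x ^ rmax p * v ^ lmin p * u ^ rmin p)
       = GF separable (\<lambda>p. x ^ lmax p * u ^ lmin p * v ^ rmin p)"
      by (rule GF_bij[where g=rev and h=rev])
         (auto simp: sep_rev lmax_rev rmax_rev lmin_rev rmin_rev mult_ac)
    finally show ?thesis by (simp add: MM_E)
  qed
  have S: "GF separable ?w = GF IRR ?w + GF RED ?w" by (rule GF_SEP_split)
  show ?thesis unfolding IRR_eq RED_eq using I R S by simp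
qed


end
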